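(* Let $\Psi$ be a finite set of contexts and $\psi_t$ a target context, and assume $D(x\mid\psi)>0$ for every $\psi\in\Psi$ and every $x\models\psi$. Then there exist finite constants $\beta_\psi\ge0$ ($\psi\in\Psi$), depending only on $\Psi$, $\psi_t$ and $D$, such that for every $h\in\mathcal{H}$ for which $\Psi$ is representative for $\psi_t$, $$L_{D,\psi_t}(h)\le\sum_{\psi\in\Psi}\beta_\psi\,L_{D,\psi}(h).$$
   Context: Let $X_1,\dots,X_n$ be Boolean variables and $\Phi=\{\phi_1,\dots,\phi_m\}$ candidate formulas; $\phi(c)=\bigwedge_{j:c_j=1}\phi_j$ for $c\in\{0,1\}^m$, $f_w(x)=\sum_jw_j\mathbb{1}[x\models\phi_j]$ for $w\in[-1,1]^m$. A context is a Boolean formula over the variables. The MAX-SAT classifier $h_{c,w}(x,\psi)=1$ iff $x\models\phi(c)\wedge\psi$ and $f_w(x)\ge f_w(x')$ for all $x'\models\phi(c)\wedge\psi$, else $0$; $\mathcal{H}$ is the set of these. A ground-truth $h^*\in\mathcal{H}$ labels the data (noiseless). For each context $\psi$, $D(x\mid\psi)$ is a distribution over assignments satisfying $\psi$, and $L_{D,\psi}(h)=\sum_{x}\mathbb{1}[h(x,\psi)\neq h^*(x,\psi)]D(x\mid\psi)$. Representativeness: for $h\in\mathcal{H}$, let $\chi(\psi,x,\psi')$ hold iff $x\models\psi\wedge\psi'$ and ($h(x,\psi)\neq h^*(x,\psi)\Rightarrow h(x,\psi')\neq h^*(x,\psi')$); let $\#(\psi,x)=|\{\psi'\in\Psi:\chi(\psi,x,\psi')\}|$.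 $\Psi$ is representative for $\psi_t$ (w.r.t. $h^*$ and $h$) iff $\#(\psi_t,x)>0$ for all assignments $x$. *)

theory Defs
  imports Complex_Main
begin

datatype 'v form = TT | FF | Atom 'v | Neg "'v form" | Conj "'v form" "'v form" | Disj "'v form" "'v form"

fun models :: "('v \<Rightarrow> bool) \<Rightarrow> 'v form \<Rightarrow> bool" where
  "models x TT = True"
| "models x FF = False"
| "models x (Atom v) = x v"
| "models x (Neg p) = (\<not> models x p)"
| "models x (Conj p q) = (models x p \<and> models x q)"
| "models x (Disj p q) = (models x p \<or> models x q)"

text \<open>Candidate formulas phi_0..phi_(m-1); x satisfies phi(c) = conjunction of phi_j with c_j = 1.\<close>
definition models_conj :: "(nat \<Rightarrow> 'v form) \<Rightarrow> nat \<Rightarrow> (nat \<Rightarrow> bool) \<Rightarrow> ('v \<Rightarrow> bool) \<Rightarrow> bool" where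
  "models_conj phi m c x = (\<forall>j<m. c j \<longrightarrow> models x (phi j))"

definition fw :: "(nat \<Rightarrow> 'v form) \<Rightarrow> nat \<Rightarrow> (nat \<Rightarrow> real) \<Rightarrow> ('v \<Rightarrow> bool) \<Rightarrow> real" where
  "fw phi m w x = (\<Sum>j<m. w j * (if models x (phi j) then 1 else 0))"

definition maxsat_cls :: "(nat \<Rightarrow> 'v form) \<Rightarrow> nat \<Rightarrow> (nat \<Rightarrow> bool) \<Rightarrow> (nat \<Rightarrow> real)
    \<Rightarrow> ('v \<Rightarrow> bool) \<Rightarrow> 'v form \<Rightarrow> bool" where
  "maxsat_cls phi m c w x psi =
     (models_conj phi m c x \<and> models x psi \<and>
      (\<forall>x'. models_conj phi m c x' \<and> models x' psi \<longrightarrow> fw phi m w x \<ge> fw phi m w x'))"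

text \<open>The hypothesis class H (c in {0,1}^m, w in [-1,1]^m; only indices < m matter).\<close>
definition hyp_class :: "(nat \<Rightarrow> 'v form) \<Rightarrow> nat \<Rightarrow> (('v \<Rightarrow> bool) \<Rightarrow> 'v form \<Rightarrow> bool) set" where
  "hyp_class phi m = {maxsat_cls phi m c w | c w. \<forall>j<m. \<bar>w j\<bar> \<le> 1}"

definition loss :: "('v form \<Rightarrow> ('v::finite \<Rightarrow> bool) \<Rightarrow> real) \<Rightarrow> (('v \<Rightarrow> bool) \<Rightarrow> 'v form \<Rightarrow> bool)
    \<Rightarrow> 'v form \<Rightarrow> (('v \<Rightarrow> bool) \<Rightarrow> 'v form \<Rightarrow> bool) \<Rightarrow> real" where
  "loss D hs psi h = (\<Sum>x\<in>UNIV. (if h x psi \<noteq> hs x psi then 1 else 0) * D psi x)"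

definition chi :: "(('v \<Rightarrow> bool) \<Rightarrow> 'v form \<Rightarrow> bool) \<Rightarrow> (('v \<Rightarrow> bool) \<Rightarrow> 'v form \<Rightarrow> bool)
    \<Rightarrow> 'v form \<Rightarrow> ('v \<Rightarrow> bool) \<Rightarrow> 'v form \<Rightarrow> bool" where
  "chi hs h psi x psi' = (models x psi \<and> models x psi' \<and>
      (h x psi \<noteq> hs x psi \<longrightarrow> h x psi' \<noteq> hs x psi'))"

definition count_rep :: "(('v \<Rightarrow> bool) \<Rightarrow> 'v form \<Rightarrow> bool) \<Rightarrow> (('v \<Rightarrow> bool) \<Rightarrow> 'v form \<Rightarrow> bool)
    \<Rightarrow> 'v form set \<Rightarrow> 'v form \<Rightarrow> ('v \<Rightarrow> bool) \<Rightarrow> nat" where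
  "count_rep hs h Psi psi x = card {psi' \<in> Psi. chi hs h psi x psi'}"

definition representative :: "(('v \<Rightarrow> bool) \<Rightarrow> 'v form \<Rightarrow> bool) \<Rightarrow> (('v \<Rightarrow> bool) \<Rightarrow> 'v form \<Rightarrow> bool)
    \<Rightarrow> 'v form set \<Rightarrow> 'v form \<Rightarrow> bool" where
  "representative hs h Psi psit = (\<forall>x. models x psit \<longrightarrow> count_rep hs h Psi psit x > 0)"

definition is_cond_dist :: "('v form \<Rightarrow> ('v::finite \<Rightarrow> bool) \<Rightarrow> real) \<Rightarrow> 'v form \<Rightarrow> bool" where
  "is_cond_dist D psi = ((\<forall>x. D psi x \<ge> 0) \<and> (\<forall>x. \<not> models x psi \<longrightarrow> D psi x = 0)
      \<and> (\<Sum>x\<in>UNIV. D psi x) = 1)"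

end

theory Submission
  imports Defs
begin

theorem lemma1:
  fixes Psi :: "('v::finite) form set" and psit :: "'v form"
    and D :: "'v form \<Rightarrow> ('v \<Rightarrow> bool) \<Rightarrow> real"
  assumes "finite Psi"
    and "\<forall>psi \<in> Psi \<union> {psit}. is_cond_dist D psi"
    and "\<forall>psi \<in> Psi. \<forall>x. models x psi \<longrightarrow> D psi x > 0"
  shows "\<exists>beta :: 'v form \<Rightarrow> real. (\<forall>psi\<in>Psi. beta psi \<ge> 0) \<and>
           (\<forall>(phi :: nat \<Rightarrow> 'v form) m hs h.
              hs \<in> hyp_class phi m \<longrightarrow> h \<in> hyp_class phi m \<longrightarrow>
              representative hs h Psi psit \<longrightarrow>
              loss D hs psit h \<le> (\<Sum>psi\<in>Psi. beta psi * loss D hs psi h))"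
proof -
  define beta where "beta psi = (\<Sum>x\<in>{x. models x psi}. 1 / D psi x)" for psi
  have bnn: "\<forall>psi\<in>Psi. beta psi \<ge> 0"
    unfolding beta_def using assms(3) by (auto intro!: sum_nonneg simp: less_imp_le)
  have bge: "beta psi * D psi x \<ge> 1" if "psi \<in> Psi" "models x psi" for psi x
  proof -
    have pos: "D psi x > 0" using assms(3) that by auto
    have "1 / D psi x \<le> beta psi" unfolding beta_def
      by (rule member_le_sum) (use that assms(3) in \<open>auto simp: less_imp_le\<close>)
    then have "1 / D psi x * D psi x \<le> beta psi * D psi x"
      using pos by (intro mult_right_mono) auto
    thus ?thesis using pos by simp
  qed
  have dt: "D psit x \<ge> 0" "D psit x \<le> 1" "\<not> models x psit \<Longrightarrow> D psit x = 0" for x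
  proof -
    have c: "is_cond_dist D psit" using assms(2) by auto
    show "D psit x \<ge> 0" "\<not> models x psit \<Longrightarrow> D psit x = 0" using c unfolding is_cond_dist_def by auto
    have "D psit x \<le> (\<Sum>y\<in>UNIV. D psit y)"
      by (rule member_le_sum) (use c in \<open>auto simp: is_cond_dist_def\<close>)
    thus "D psit x \<le> 1" using c unfolding is_cond_dist_def by auto
  qed
  have dnn: "D psi x \<ge> 0" if "psi \<in> Psi" for psi x
    using assms(2) that unfolding is_cond_dist_def by auto
  show ?thesis
  proof (intro exI[of _ beta] conjI bnn allI impI)
    fix phi :: "nat \<Rightarrow> 'v form" and m hs h
    assume rep: "representative hs h Psi psit"
    define e where "e psi x = (if h x psi \<noteq> hs x psi then 1 else 0 :: real)" for psi x
    have tnn: "0 \<le> beta psi * (e psi x * D psi x)" if "psi \<in> Psi" for psi x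
      using bnn dnn that unfolding e_def by auto
    have pw: "e psit x * D psit x \<le> (\<Sum>psi\<in>Psi. beta psi * (e psi x * D psi x))" for x
    proof (cases "models x psit \<and> h x psit \<noteq> hs x psit")
      case False
      then have "e psit x * D psit x = 0" using dt(3)[of x] unfolding e_def by auto
      moreover have "0 \<le> (\<Sum>psi\<in>Psi. beta psi * (e psi x * D psi x))" using tnn by (simp add: sum_nonneg)
      ultimately show ?thesis by (metis mult_eq_0_iff)
    next
      case True
      then have "count_rep hs h Psi psit x > 0" using rep unfolding representative_def by auto
      then have "{psi' \<in> Psi. chi hs h psit x psi'} \<noteq> {}" unfolding count_rep_def
        by (metis card.empty less_irrefl)
      then obtain p where p: "p \<in> Psi" "chi hs h psit x p" by auto
      then have pe: "e p x = 1" "models x p" using True unfolding chi_def e_def by auto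
      have "e psit x * D psit x \<le> 1" using dt[of x] unfolding e_def by auto
      also have "\<dots> \<le> beta p * (e p x * D p x)" using bge[OF p(1) pe(2)] pe by simp
      also have "\<dots> \<le> (\<Sum>psi\<in>Psi. beta psi * (e psi x * D psi x))"
        by (rule member_le_sum) (use p tnn assms(1) in auto)
      finally show ?thesis .
    qed
    have "loss D hs psit h = (\<Sum>x\<in>UNIV. e psit x * D psit x)"
      unfolding loss_def e_def by simp
    also have "\<dots> \<le> (\<Sum>x\<in>UNIV. \<Sum>psi\<in>Psi. beta psi * (e psi x * D psi x))"
      by (rule sum_mono) (rule pw)
    also have "\<dots> = (\<Sum>psi\<in>Psi. \<Sum>x\<in>UNIV. beta psi * (e psi x * D psi x))"
      by (rule sum.swap)
    also have "\<dots> = (\<Sum>psi\<in>Psi. beta psi * loss D hs psi h)"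
      unfolding loss_def e_def by (simp add: sum_distrib_left)
    finally show "loss D hs psit h \<le> (\<Sum>psi\<in>Psi. beta psi * loss D hs psi h)" .
  qed
qed

end
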